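(* Assume Assumptions 1, let $s\in(0,1/2)$ and $m\in\mathbb N$. Then for every $f\in C(\overline{\mathbb R})$, $$\lim_{\kappa\downarrow0}\ \sup_{E\in\mathbb R}\ \big\|T^m_{\kappa,E,s}f-T^m_{0,E,s}f\big\|_\infty=0,$$ where $\|\cdot\|_\infty$ is the sup-norm on $C(\overline{\mathbb R})$.
   Context: Assumptions 1: $\nu$ has bounded density (also denoted $\nu$) supported in $[-K,K]$, $K<\infty$; $\sigma$ is a probability measure on $\mathbb R^2$ supported in $[-1,1]^2$. $\overline{\mathbb R}=\mathbb R\cup\{i\infty\}$ is the one-point compactification of $\mathbb R$ and $C(\overline{\mathbb R})$ the real continuous functions on it with sup-norm. For $\kappa\ge0$ let $\mu_\kappa$ be the law of $q=(r+\kappa p_0,r+\kappa p_1)$ with $r\sim\nu$, $(p_0,p_1)\sim\sigma$ independent. For $E\in\mathbb R$, $q=(q_0,q_1)$, define $\phi^\pm_{E,q}(w)=\tfrac12\big(\frac{-1}{w+(E-q_0)/\sqrt2}\pm\frac{-1}{w+(E-q_1)/\sqrt2}\big)$, $\phi^\pm_{E,q}(i\infty)=0$, and on $C(\overline{\mathbb R})$ $(T_{\kappa,E,s}f)(w)=\int f(\phi^+_{E,q}(w))\big(|\phi^+_{E,q}(w)|^s+|\phi^-_{E,q}(w)|^s\big)\,d\mu_\kappa(q)$, $(T_{\kappa,E,s}f)(i\infty)=0$. *)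

theory Defs
  imports "HOL-Probability.Probability"
begin

text \<open>The one-point compactification of the reals is modelled as real option:
  Some x is the real point x, None is the point at infinity (written i infinity in the paper).\<close>

definition in_C_rbar :: "(real option \<Rightarrow> real) \<Rightarrow> bool" where
  "in_C_rbar f \<longleftrightarrow> continuous_on UNIV (\<lambda>x. f (Some x)) \<and>
     ((\<lambda>x. f (Some x)) \<longlongrightarrow> f None) at_infinity"

definition phi_plus :: "real \<Rightarrow> real \<times> real \<Rightarrow> real option \<Rightarrow> real option" where
  "phi_plus E q w = (case w of None \<Rightarrow> Some 0
     | Some x \<Rightarrow> if x + (E - fst q) / sqrt 2 = 0 \<or> x + (E - snd q) / sqrt 2 = 0 then None
         else Some (((-1) / (x + (E - fst q) / sqrt 2) + (-1) / (x + (E - snd q) / sqrt 2)) / 2))"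

definition phi_minus :: "real \<Rightarrow> real \<times> real \<Rightarrow> real option \<Rightarrow> real option" where
  "phi_minus E q w = (case w of None \<Rightarrow> Some 0
     | Some x \<Rightarrow> if x + (E - fst q) / sqrt 2 = 0 \<or> x + (E - snd q) / sqrt 2 = 0 then None
         else Some (((-1) / (x + (E - fst q) / sqrt 2) - (-1) / (x + (E - snd q) / sqrt 2)) / 2))"

text \<open>Absolute value of a point of the compactification; the value at infinity is a
  convention only used on a null set of q.\<close>
definition opt_abs :: "real option \<Rightarrow> real" where
  "opt_abs w = (case w of None \<Rightarrow> 0 | Some x \<Rightarrow> \<bar>x\<bar>)"

definition mu :: "(real \<Rightarrow> real) \<Rightarrow> (real \<times> real) measure \<Rightarrow> real \<Rightarrow> (real \<times> real) measure" where
  "mu nu sig \<kappa> = distr (density lborel (\<lambda>r. ennreal (nu r)) \<Otimes>\<^sub>M sig) borel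
     (\<lambda>(r, p). (r + \<kappa> * fst p, r + \<kappa> * snd p))"

definition T_op :: "(real \<Rightarrow> real) \<Rightarrow> (real \<times> real) measure \<Rightarrow> real \<Rightarrow> real \<Rightarrow> real
    \<Rightarrow> (real option \<Rightarrow> real) \<Rightarrow> real option \<Rightarrow> real" where
  "T_op nu sig \<kappa> E s f w = (case w of None \<Rightarrow> 0
     | Some _ \<Rightarrow> \<integral>q. f (phi_plus E q w) *
          (opt_abs (phi_plus E q w) powr s + opt_abs (phi_minus E q w) powr s) \<partial>(mu nu sig \<kappa>))"

end

theory Submission
  imports Defs
begin


definition sing :: "real \<Rightarrow> real \<Rightarrow> real \<Rightarrow> real" where
  "sing s \<rho> z = indicator {-\<rho>..\<rho>} z * \<bar>z\<bar> powr (-s)"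

lemma sing_nonneg: "0 \<le> sing s \<rho> z" by (simp add: sing_def)

lemma sing_meas[measurable]: "sing s \<rho> \<in> borel_measurable borel"
  unfolding sing_def by measurable

lemma int_sing_pos:
  fixes s \<rho> :: real assumes "0 < s" "s < 1" "0 < \<rho>"
  shows "(\<integral>\<^sup>+z. ennreal (indicator {0..\<rho>} z * z powr (-s)) \<partial>lborel) = ennreal (\<rho> powr (1-s) / (1-s))"
proof -
  have "((\<lambda>x. x powr (-s)) has_integral (\<rho> powr (-s+1) / (-s+1))) {0..\<rho>}"
    using has_integral_powr_from_0[of "-s" \<rho>] assms by simp
  from nn_integral_has_integral_lebesgue'[OF _ this]
  have "(\<integral>\<^sup>+x. ennreal (x powr (-s)) * indicator {0..\<rho>} x \<partial>lborel) = ennreal (\<rho> powr (-s+1) / (-s+1))"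
    by simp
  moreover have "\<And>x. ennreal (x powr (-s)) * indicator {0..\<rho>} x = ennreal (indicator {0..\<rho>} x * x powr (-s))"
    by (simp add: indicator_def)
  ultimately show ?thesis by simp
qed

lemma int_sing:
  fixes s \<rho> :: real assumes "0 < s" "s < 1" "0 < \<rho>"
  shows "(\<integral>\<^sup>+z. ennreal (sing s \<rho> z) \<partial>lborel) = ennreal (2 * \<rho> powr (1-s) / (1-s))"
proof -
  have eq: "ennreal (sing s \<rho> z) = ennreal (indicator {0..\<rho>} z * z powr (-s)) + ennreal (indicator {0..\<rho>} (0 + (-1) * z) * (0 + (-1) * z) powr (-s))" for z
    by (cases "z = 0"; cases "z < 0") (auto simp: sing_def indicator_def)
  have m: "(\<lambda>z. ennreal (indicator {0..\<rho>} z * z powr (-s))) \<in> borel_measurable borel" by measurable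
  have "(\<integral>\<^sup>+z. ennreal (sing s \<rho> z) \<partial>lborel) = 
     (\<integral>\<^sup>+z. ennreal (indicator {0..\<rho>} z * z powr (-s)) \<partial>lborel) + (\<integral>\<^sup>+z. ennreal (indicator {0..\<rho>} (0 + (-1) * z) * (0 + (-1) * z) powr (-s)) \<partial>lborel)"
    unfolding eq by (rule nn_integral_add) auto
  also have "(\<integral>\<^sup>+z. ennreal (indicator {0..\<rho>} (0 + (-1) * z) * (0 + (-1) * z) powr (-s)) \<partial>lborel)
      = (\<integral>\<^sup>+z. ennreal (indicator {0..\<rho>} z * z powr (-s)) \<partial>lborel)"
    using nn_integral_real_affine[OF m, of "-1" 0] by simp
  finally have "(\<integral>\<^sup>+z. ennreal (sing s \<rho> z) \<partial>lborel) = ennreal (\<rho> powr (1-s) / (1-s)) + ennreal (\<rho> powr (1-s) / (1-s))"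
    using int_sing_pos[OF assms] by simp
  also have "\<dots> = ennreal (\<rho> powr (1-s) / (1-s) + \<rho> powr (1-s) / (1-s))"
    using assms by (intro ennreal_plus[symmetric]) auto
  finally show ?thesis by simp
qed

lemma nn_bound_integrable:
  fixes h :: "'a \<Rightarrow> real"
  assumes [measurable]: "h \<in> borel_measurable M" and nn: "\<And>x. 0 \<le> h x"
    and le: "(\<integral>\<^sup>+x. ennreal (h x) \<partial>M) \<le> ennreal C" and C: "0 \<le> C"
  shows "integrable M h" "integral\<^sup>L M h \<le> C"
proof -
  have "(\<integral>\<^sup>+x. ennreal (norm (h x)) \<partial>M) < \<infinity>" using le nn
    by (simp add: le_less_trans)
  thus "integrable M h" by (intro integrableI_bounded) auto
  have "integral\<^sup>L M h = enn2real (\<integral>\<^sup>+x. ennreal (h x) \<partial>M)"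
    by (rule integral_eq_nn_integral) (auto simp: nn)
  also have "\<dots> \<le> C" using le C
    by (metis enn2real_ennreal enn2real_mono ennreal_neq_top top.not_eq_extremum)
  finally show "integral\<^sup>L M h \<le> C" .
qed

locale setting =
  fixes nu :: "real \<Rightarrow> real" and sig :: "(real \<times> real) measure" and s B :: real
  assumes nu_meas[measurable]: "nu \<in> borel_measurable borel"
    and nu_nn: "\<And>x. 0 \<le> nu x" and nu_le: "\<And>x. nu x \<le> B"
    and P_prob: "prob_space (density lborel (\<lambda>x. ennreal (nu x)))"
    and sig_prob: "prob_space sig"
    and sets_sig[measurable_cong]: "sets sig = sets borel"
    and sig_box: "AE p in sig. \<bar>fst p\<bar> \<le> 1 \<and> \<bar>snd p\<bar> \<le> 1"
    and s_pos: "0 < s" and s_lt: "s < 1"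
begin

abbreviation "P \<equiv> density lborel (\<lambda>x. ennreal (nu x))"
abbreviation "D \<equiv> P \<Otimes>\<^sub>M sig"

lemma B_nonneg: "0 \<le> B" using nu_nn[of 0] nu_le[of 0] by simp

sublocale pp: pair_prob_space P sig
  by (simp add: pair_prob_space_def pair_sigma_finite_def P_prob sig_prob prob_space_imp_sigma_finite)

definition Cs :: "real \<Rightarrow> real" where
  "Cs \<rho> = B * sqrt 2 * (2 * \<rho> powr (1-s) / (1-s))"

lemma Cs_nonneg: "0 \<le> Cs \<rho>" unfolding Cs_def using B_nonneg s_lt by simp

lemma P_sing:
  assumes "0 < \<rho>"
  shows "(\<integral>\<^sup>+r. ennreal (sing s \<rho> (c - r / sqrt 2)) \<partial>P) \<le> ennreal (Cs \<rho>)"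
proof -
  have "(\<integral>\<^sup>+r. ennreal (sing s \<rho> (c - r / sqrt 2)) \<partial>P) = (\<integral>\<^sup>+r. ennreal (nu r) * ennreal (sing s \<rho> (c - r / sqrt 2)) \<partial>lborel)"
    by (rule nn_integral_density) auto
  also have "\<dots> \<le> (\<integral>\<^sup>+r. ennreal B * ennreal (sing s \<rho> (c - r / sqrt 2)) \<partial>lborel)"
    by (intro nn_integral_mono mult_right_mono ennreal_leI) (auto simp: nu_le)
  also have "\<dots> = (\<integral>\<^sup>+r. ennreal B * ennreal (sing s \<rho> (c + (- 1 / sqrt 2) * r)) \<partial>lborel)"
    by (intro nn_integral_cong) simp
  also have "\<dots> = ennreal B * (\<integral>\<^sup>+r. ennreal (sing s \<rho> (c + (- 1 / sqrt 2) * r)) \<partial>lborel)"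
    by (rule nn_integral_cmult) auto
  also have "(\<integral>\<^sup>+r. ennreal (sing s \<rho> (c + (- 1 / sqrt 2) * r)) \<partial>lborel) = ennreal (sqrt 2) * (\<integral>\<^sup>+z. ennreal (sing s \<rho> z) \<partial>lborel)"
  proof -
    have "(\<integral>\<^sup>+z. ennreal (sing s \<rho> z) \<partial>lborel) = ennreal \<bar>- 1 / sqrt 2\<bar> * (\<integral>\<^sup>+r. ennreal (sing s \<rho> (c + (- 1 / sqrt 2) * r)) \<partial>lborel)"
      by (rule nn_integral_real_affine) auto
    hence "ennreal (sqrt 2) * (\<integral>\<^sup>+z. ennreal (sing s \<rho> z) \<partial>lborel) = (ennreal (sqrt 2) * ennreal (1 / sqrt 2)) * (\<integral>\<^sup>+r. ennreal (sing s \<rho> (c + (- 1 / sqrt 2) * r)) \<partial>lborel)"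
      by (simp add: mult.assoc)
    also have "ennreal (sqrt 2) * ennreal (1 / sqrt 2) = 1"
      by (simp add: ennreal_mult[symmetric] del: ennreal_mult)
    finally show ?thesis by simp
  qed
  also have "ennreal B * (ennreal (sqrt 2) * (\<integral>\<^sup>+z. ennreal (sing s \<rho> z) \<partial>lborel)) = ennreal (Cs \<rho>)"
    unfolding int_sing[OF s_pos s_lt assms] Cs_def using B_nonneg s_lt
    by (simp add: ennreal_mult[symmetric] del: ennreal_mult)
  finally show ?thesis by simp
qed

lemma D_sing_nn:
  assumes "0 < \<rho>" and [measurable]: "u \<in> borel_measurable sig"
  shows "(\<integral>\<^sup>+z. ennreal (sing s \<rho> (c - fst z / sqrt 2 - u (snd z))) \<partial>D) \<le> ennreal (Cs \<rho>)"
proof -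
  have "(\<integral>\<^sup>+z. ennreal (sing s \<rho> (c - fst z / sqrt 2 - u (snd z))) \<partial>D)
     = (\<integral>\<^sup>+p. (\<integral>\<^sup>+r. ennreal (sing s \<rho> (c - r / sqrt 2 - u p)) \<partial>P) \<partial>sig)"
    by (subst pp.nn_integral_snd[symmetric]) auto
  also have "\<dots> \<le> (\<integral>\<^sup>+p. ennreal (Cs \<rho>) \<partial>sig)"
  proof (intro nn_integral_mono)
    fix p
    have "(\<integral>\<^sup>+r. ennreal (sing s \<rho> (c - r / sqrt 2 - u p)) \<partial>P) = (\<integral>\<^sup>+r. ennreal (sing s \<rho> ((c - u p) - r / sqrt 2)) \<partial>P)"
      by (intro nn_integral_cong) (simp add: algebra_simps)
    thus "(\<integral>\<^sup>+r. ennreal (sing s \<rho> (c - r / sqrt 2 - u p)) \<partial>P) \<le> ennreal (Cs \<rho>)"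
      using P_sing[OF assms(1), of "c - u p"] by simp
  qed
  also have "\<dots> = ennreal (Cs \<rho>)" using pp.M2.emeasure_space_1 by simp
  finally show ?thesis .
qed

lemma D_sing:
  assumes "0 < \<rho>" and [measurable]: "u \<in> borel_measurable sig"
  shows "integrable D (\<lambda>z. sing s \<rho> (c - fst z / sqrt 2 - u (snd z)))"
    "(\<integral>z. sing s \<rho> (c - fst z / sqrt 2 - u (snd z)) \<partial>D) \<le> Cs \<rho>"
  using nn_bound_integrable[OF _ sing_nonneg D_sing_nn[OF assms] Cs_nonneg] by auto

end



lemma powr_subadd:
  fixes x y s :: real assumes "0 \<le> x" "0 \<le> y" "0 < s" "s \<le> 1"
  shows "(x + y) powr s \<le> x powr s + y powr s"
proof (cases "x + y = 0")
  case True thus ?thesis using assms by simp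
next
  case False
  define t where "t = x + y"
  have t: "0 < t" using False assms unfolding t_def by simp
  have "x / t \<le> (x / t) powr s"
    using powr_mono'[of s 1 "x/t"] assms t by (simp add: t_def)
  moreover have "y / t \<le> (y / t) powr s"
    using powr_mono'[of s 1 "y/t"] assms t by (simp add: t_def)
  moreover have "x / t + y / t = 1" using t by (simp add: t_def add_divide_distrib[symmetric])
  ultimately have "1 \<le> (x / t) powr s + (y / t) powr s" by linarith
  hence "t powr s * 1 \<le> t powr s * ((x / t) powr s + (y / t) powr s)"
    by (intro mult_left_mono) auto
  also have "\<dots> = x powr s + y powr s"
    using t assms by (simp add: powr_divide distrib_left)
  finally show ?thesis by (simp add: t_def)
qed

lemma powr_diff_le:
  fixes x y s :: real assumes "0 \<le> x" "0 \<le> y" "0 < s" "s \<le> 1"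
  shows "\<bar>x powr s - y powr s\<bar> \<le> \<bar>x - y\<bar> powr s"
proof (cases "x \<le> y")
  case True
  have "y powr s = (x + (y - x)) powr s" by simp
  also have "\<dots> \<le> x powr s + (y - x) powr s" using assms True by (intro powr_subadd) auto
  finally have "y powr s - x powr s \<le> \<bar>x - y\<bar> powr s" using True by simp
  moreover have "x powr s \<le> y powr s" using True assms by (intro powr_mono2) auto
  ultimately show ?thesis by simp
next
  case False
  have "x powr s = (y + (x - y)) powr s" by simp
  also have "\<dots> \<le> y powr s + (x - y) powr s" using assms False by (intro powr_subadd) auto
  finally have "x powr s - y powr s \<le> \<bar>x - y\<bar> powr s" using False by simp
  moreover have "y powr s \<le> x powr s" using False assms by (intro powr_mono2) auto
  ultimately show ?thesis by simp
qed

definition phip :: "real \<Rightarrow> real \<Rightarrow> real" where "phip a b = ((-1)/a + (-1)/b)/2"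
definition phim :: "real \<Rightarrow> real \<Rightarrow> real" where "phim a b = ((-1)/a - (-1)/b)/2"

definition Phi :: "real \<Rightarrow> (real \<Rightarrow> real) \<Rightarrow> real \<Rightarrow> real \<Rightarrow> real" where
  "Phi s G a b = (if a = 0 \<or> b = 0 then 0 else G (phip a b) * (\<bar>phip a b\<bar> powr s + \<bar>phim a b\<bar> powr s))"

lemma Phi_measurable[measurable (raw)]:
  assumes [measurable]: "G \<in> borel_measurable borel" "f \<in> borel_measurable M" "g \<in> borel_measurable M"
  shows "(\<lambda>x. Phi s G (f x) (g x)) \<in> borel_measurable M"
  unfolding Phi_def phip_def phim_def by measurable

lemma Phi_diff: "Phi s G1 a b - Phi s G2 a b = Phi s (\<lambda>x. G1 x - G2 x) a b"
  by (simp add: Phi_def algebra_simps)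

lemma inv_powr: "(1 / \<bar>a\<bar>) powr s = \<bar>a\<bar> powr (-s)" for a s :: real
  by (simp add: powr_divide powr_minus_divide)

lemma phi_le_max:
  assumes "a \<noteq> 0" "b \<noteq> 0"
  shows "\<bar>phip a b\<bar> \<le> max (1/\<bar>a\<bar>) (1/\<bar>b\<bar>)" "\<bar>phim a b\<bar> \<le> max (1/\<bar>a\<bar>) (1/\<bar>b\<bar>)"
proof -
  have "\<bar>(-1)/a + (-1)/b\<bar> \<le> \<bar>(-1)/a\<bar> + \<bar>(-1)/b\<bar>" by (rule abs_triangle_ineq)
  hence "\<bar>phip a b\<bar> \<le> (1/\<bar>a\<bar> + 1/\<bar>b\<bar>)/2" unfolding phip_def by simp
  moreover have "(1/\<bar>a\<bar> + 1/\<bar>b\<bar>)/2 \<le> max (1/\<bar>a\<bar>) (1/\<bar>b\<bar>)" by (auto simp: max_def)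
  ultimately show "\<bar>phip a b\<bar> \<le> max (1/\<bar>a\<bar>) (1/\<bar>b\<bar>)" by linarith
  have "\<bar>(-1)/a - (-1)/b\<bar> \<le> \<bar>(-1)/a\<bar> + \<bar>(-1)/b\<bar>" by (rule abs_triangle_ineq4)
  hence "\<bar>phim a b\<bar> \<le> (1/\<bar>a\<bar> + 1/\<bar>b\<bar>)/2" unfolding phim_def by simp
  moreover have "(1/\<bar>a\<bar> + 1/\<bar>b\<bar>)/2 \<le> max (1/\<bar>a\<bar>) (1/\<bar>b\<bar>)" by (auto simp: max_def)
  ultimately show "\<bar>phim a b\<bar> \<le> max (1/\<bar>a\<bar>) (1/\<bar>b\<bar>)" by linarith
qed

lemma powr_max_le: "0 \<le> s \<Longrightarrow> (max (1/\<bar>a\<bar>) (1/\<bar>b\<bar>)) powr s \<le> \<bar>a\<bar> powr (-s) + \<bar>b\<bar> powr (-s)"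
  for a b s :: real
proof -
  have "(max (1/\<bar>a\<bar>) (1/\<bar>b\<bar>)) powr s = (1/\<bar>a\<bar>) powr s \<or> (max (1/\<bar>a\<bar>) (1/\<bar>b\<bar>)) powr s = (1/\<bar>b\<bar>) powr s"
    by (simp add: max_def)
  moreover have "0 \<le> \<bar>a\<bar> powr (-s)" "0 \<le> \<bar>b\<bar> powr (-s)" by auto
  ultimately show ?thesis unfolding inv_powr by linarith
qed

lemma Phi_bound:
  assumes "\<And>x. \<bar>G x\<bar> \<le> M" "0 \<le> s"
  shows "\<bar>Phi s G a b\<bar> \<le> 2 * M * (\<bar>a\<bar> powr (-s) + \<bar>b\<bar> powr (-s))"
proof (cases "a = 0 \<or> b = 0")
  case True
  have "0 \<le> M" using assms(1)[of 0] by simp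
  thus ?thesis using True by (auto simp: Phi_def)
next
  case False
  have M0: "0 \<le> M" using assms(1)[of 0] by (meson abs_ge_zero order_trans)
  have 1: "\<bar>phip a b\<bar> powr s \<le> \<bar>a\<bar> powr (-s) + \<bar>b\<bar> powr (-s)"
    using powr_mono2[OF assms(2) _ phi_le_max(1)] False powr_max_le[OF assms(2)] by (meson abs_ge_zero order_trans)
  have 2: "\<bar>phim a b\<bar> powr s \<le> \<bar>a\<bar> powr (-s) + \<bar>b\<bar> powr (-s)"
    using powr_mono2[OF assms(2) _ phi_le_max(2)] False powr_max_le[OF assms(2)] by (meson abs_ge_zero order_trans)
  have "\<bar>Phi s G a b\<bar> = \<bar>G (phip a b)\<bar> * (\<bar>phip a b\<bar> powr s + \<bar>phim a b\<bar> powr s)"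
    using False by (simp add: Phi_def abs_mult)
  also have "\<dots> \<le> M * (2 * (\<bar>a\<bar> powr (-s) + \<bar>b\<bar> powr (-s)))"
    using 1 2 assms(1) M0 by (intro mult_mono) auto
  finally show ?thesis by (simp add: algebra_simps)
qed


lemma frac_bound:
  fixes n d N D :: real
  assumes "\<bar>n\<bar> \<le> N" "D \<le> \<bar>d\<bar>" "0 < D"
  shows "\<bar>n / d\<bar> \<le> N / D"
proof -
  have "\<bar>n / d\<bar> = \<bar>n\<bar> / \<bar>d\<bar>" by (simp add: abs_divide)
  also have "\<dots> \<le> N / \<bar>d\<bar>" using assms by (intro divide_right_mono) auto
  also have "\<dots> \<le> N / D" using assms by (intro divide_left_mono) auto
  finally show ?thesis .
qed

lemma Phi_local:
  assumes G: "\<And>x. \<bar>G x\<bar> \<le> M"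
    and cont: "\<And>u v. \<bar>u - v\<bar> \<le> 2 * \<kappa> / \<delta>^2 \<Longrightarrow> \<bar>G u - G v\<bar> \<le> \<eta>"
    and d: "0 < \<delta>" "\<delta> \<le> \<bar>y\<bar>" and ab: "\<bar>a - y\<bar> \<le> \<kappa>" "\<bar>b - y\<bar> \<le> \<kappa>" and k: "0 \<le> \<kappa>" "2 * \<kappa> \<le> \<delta>"
    and s: "0 < s" "s \<le> 1"
  shows "\<bar>Phi s G a b - Phi s G y y\<bar> \<le> M * (4 * \<kappa> / \<delta>^2) powr s + \<eta> * (2 / \<delta>) powr s + M * (2 * \<kappa> / \<delta>^2) powr s"
proof -
  have M0: "0 \<le> M" using G[of 0] by (meson abs_ge_zero order_trans)
  have eta0: "0 \<le> \<eta>" using cont[of 0 0] k d by (simp add: divide_nonneg_pos)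
  have ya: "\<bar>y\<bar> \<le> \<bar>a\<bar> + \<bar>a - y\<bar>" "\<bar>y\<bar> \<le> \<bar>b\<bar> + \<bar>b - y\<bar>" by (auto simp: abs_le_iff abs_if)
  have ageq: "\<delta>/2 \<le> \<bar>a\<bar>" "\<delta>/2 \<le> \<bar>b\<bar>" using ya ab d k by linarith+
  hence a0: "a \<noteq> 0" "b \<noteq> 0" "y \<noteq> 0" using d by auto
  define U where "U = phip a b"
  define V where "V = phim a b"
  define W where "W = -1 / y"
  have PA: "Phi s G a b = G U * (\<bar>U\<bar> powr s + \<bar>V\<bar> powr s)" using a0 by (simp add: Phi_def U_def V_def)
  have PY: "Phi s G y y = G W * \<bar>W\<bar> powr s" using a0 by (simp add: Phi_def W_def phip_def phim_def)
  have dd: "\<delta>/2 * (\<delta>/2) = \<delta>^2/4" "\<delta>/2 * \<delta> = \<delta>^2/2" by (simp_all add: power2_eq_square)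
  have V1: "V = (a - b) / (2 * (a * b))" using a0 by (simp add: V_def phim_def field_simps)
  have "\<bar>a - b\<bar> \<le> 2 * \<kappa>" using ab by linarith
  moreover have "\<delta>^2/2 \<le> \<bar>2 * (a * b)\<bar>" using mult_mono[OF ageq] d dd by (simp add: abs_mult)
  ultimately have Vb: "\<bar>V\<bar> \<le> (2 * \<kappa>) / (\<delta>^2/2)" unfolding V1 using d by (intro frac_bound) auto
  have Vb': "\<bar>V\<bar> \<le> 4 * \<kappa> / \<delta>^2" using Vb by (simp add: field_simps)
  have UW: "U - W = ((a - y) / (a * y) + (b - y) / (b * y)) / 2" using a0 by (simp add: U_def W_def phip_def field_simps)
  have "\<delta>^2/2 \<le> \<bar>a * y\<bar>" using mult_mono[OF ageq(1) d(2)] d dd by (simp add: abs_mult)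
  hence e1: "\<bar>(a - y) / (a * y)\<bar> \<le> \<kappa> / (\<delta>^2/2)" using ab d by (intro frac_bound) auto
  have "\<delta>^2/2 \<le> \<bar>b * y\<bar>" using mult_mono[OF ageq(2) d(2)] d dd by (simp add: abs_mult)
  hence e2: "\<bar>(b - y) / (b * y)\<bar> \<le> \<kappa> / (\<delta>^2/2)" using ab d by (intro frac_bound) auto
  have "\<bar>U - W\<bar> \<le> (\<kappa> / (\<delta>^2/2) + \<kappa> / (\<delta>^2/2)) / 2" unfolding UW using e1 e2 by (simp add: abs_triangle_ineq order_trans[OF abs_triangle_ineq])
  hence UWb: "\<bar>U - W\<bar> \<le> 2 * \<kappa> / \<delta>^2" by (simp add: field_simps)
  have "\<bar>U\<bar> \<le> max (1/\<bar>a\<bar>) (1/\<bar>b\<bar>)" unfolding U_def by (rule phi_le_max(1)[OF a0(1,2)])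
  moreover have "1/\<bar>a\<bar> \<le> 2/\<delta>" "1/\<bar>b\<bar> \<le> 2/\<delta>" using ageq d by (auto simp: field_simps)
  ultimately have Ub: "\<bar>U\<bar> \<le> 2/\<delta>" by linarith
  have "Phi s G a b - Phi s G y y = G U * \<bar>V\<bar> powr s + (G U - G W) * \<bar>U\<bar> powr s + G W * (\<bar>U\<bar> powr s - \<bar>W\<bar> powr s)"
    unfolding PA PY by (simp add: algebra_simps)
  moreover have "\<bar>x + y + z\<bar> \<le> \<bar>x\<bar> + \<bar>y\<bar> + \<bar>z\<bar>" for x y z :: real by arith
  ultimately have "\<bar>Phi s G a b - Phi s G y y\<bar> \<le> \<bar>G U\<bar> * \<bar>V\<bar> powr s + \<bar>G U - G W\<bar> * \<bar>U\<bar> powr s + \<bar>G W\<bar> * \<bar>\<bar>U\<bar> powr s - \<bar>W\<bar> powr s\<bar>"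
    by (metis abs_mult abs_of_nonneg powr_ge_zero)
  also have "\<dots> \<le> M * (4 * \<kappa> / \<delta>^2) powr s + \<eta> * (2 / \<delta>) powr s + M * (2 * \<kappa> / \<delta>^2) powr s"
  proof (intro add_mono mult_mono)
    show "\<bar>V\<bar> powr s \<le> (4 * \<kappa> / \<delta>^2) powr s" using Vb' s by (intro powr_mono2) auto
    show "\<bar>U\<bar> powr s \<le> (2 / \<delta>) powr s" using Ub s by (intro powr_mono2) auto
    show "\<bar>G U - G W\<bar> \<le> \<eta>" using UWb by (intro cont)
    have "\<bar>\<bar>U\<bar> powr s - \<bar>W\<bar> powr s\<bar> \<le> \<bar>\<bar>U\<bar> - \<bar>W\<bar>\<bar> powr s" using s by (intro powr_diff_le) auto
    also have "\<dots> \<le> (2 * \<kappa> / \<delta>^2) powr s" using UWb s by (intro powr_mono2) auto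
    finally show "\<bar>\<bar>U\<bar> powr s - \<bar>W\<bar> powr s\<bar> \<le> (2 * \<kappa> / \<delta>^2) powr s" .
  qed (auto simp: G M0 eta0)
  finally show ?thesis .
qed



context setting
begin

lemma negpow_le: "\<bar>x\<bar> powr (-s) \<le> sing s 1 x + 1"
proof (cases "\<bar>x\<bar> \<le> 1")
  case True thus ?thesis by (simp add: sing_def indicator_def abs_le_iff)
next
  case False
  hence "\<bar>x\<bar> powr (-s) \<le> \<bar>x\<bar> powr 0" using s_pos by (intro powr_mono) auto
  thus ?thesis using False sing_nonneg[of s 1 x] by (auto split: if_splits)
qed

lemma negpow_int:
  assumes [measurable]: "u \<in> borel_measurable sig"
  shows "integrable D (\<lambda>z. \<bar>c - fst z / sqrt 2 - u (snd z)\<bar> powr (-s))"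
    "(\<integral>z. \<bar>c - fst z / sqrt 2 - u (snd z)\<bar> powr (-s) \<partial>D) \<le> Cs 1 + 1"
proof -
  note I = D_sing[of 1 u c, simplified]
  have I2: "integrable D (\<lambda>z. sing s 1 (c - fst z / sqrt 2 - u (snd z)) + 1)"
    using I by (intro Bochner_Integration.integrable_add pp.integrable_const) auto
  show i: "integrable D (\<lambda>z. \<bar>c - fst z / sqrt 2 - u (snd z)\<bar> powr (-s))"
    by (rule Bochner_Integration.integrable_bound[OF I2]) (auto intro!: AE_I2 simp: negpow_le order_trans[OF negpow_le] abs_of_nonneg sing_nonneg add_nonneg_nonneg)
  have "(\<integral>z. \<bar>c - fst z / sqrt 2 - u (snd z)\<bar> powr (-s) \<partial>D) \<le> (\<integral>z. sing s 1 (c - fst z / sqrt 2 - u (snd z)) + 1 \<partial>D)"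
    by (intro integral_mono i I2 negpow_le)
  also have "\<dots> = (\<integral>z. sing s 1 (c - fst z / sqrt 2 - u (snd z)) \<partial>D) + 1"
    using I by (subst Bochner_Integration.integral_add) (auto simp: pp.integrable_const pp.prob_space)
  finally show "(\<integral>z. \<bar>c - fst z / sqrt 2 - u (snd z)\<bar> powr (-s) \<partial>D) \<le> Cs 1 + 1" using I by simp
qed

lemma Phi_int:
  assumes [measurable]: "G \<in> borel_measurable borel" "u0 \<in> borel_measurable sig" "u1 \<in> borel_measurable sig"
    and G: "\<And>x. \<bar>G x\<bar> \<le> M"
  shows "integrable D (\<lambda>z. Phi s G (c - fst z / sqrt 2 - u0 (snd z)) (c - fst z / sqrt 2 - u1 (snd z)))"
    "\<bar>\<integral>z. Phi s G (c - fst z / sqrt 2 - u0 (snd z)) (c - fst z / sqrt 2 - u1 (snd z)) \<partial>D\<bar> \<le> 4 * M * (Cs 1 + 1)"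
proof -
  have M0: "0 \<le> M" using G[of 0] by (meson abs_ge_zero order_trans)
  let ?b = "\<lambda>z. 2 * M * (\<bar>c - fst z / sqrt 2 - u0 (snd z)\<bar> powr (-s) + \<bar>c - fst z / sqrt 2 - u1 (snd z)\<bar> powr (-s))"
  have ib: "integrable D ?b" using negpow_int by (intro Bochner_Integration.integrable_mult_right Bochner_Integration.integrable_add) auto
  have pb: "\<bar>Phi s G (c - fst z / sqrt 2 - u0 (snd z)) (c - fst z / sqrt 2 - u1 (snd z))\<bar> \<le> ?b z" for z
    using Phi_bound[OF G] s_pos by simp
  show i: "integrable D (\<lambda>z. Phi s G (c - fst z / sqrt 2 - u0 (snd z)) (c - fst z / sqrt 2 - u1 (snd z)))"
    by (rule Bochner_Integration.integrable_bound[OF ib]) (auto intro!: AE_I2 intro: order_trans[OF pb] simp: M0)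
  have "\<bar>\<integral>z. Phi s G (c - fst z / sqrt 2 - u0 (snd z)) (c - fst z / sqrt 2 - u1 (snd z)) \<partial>D\<bar> \<le> (\<integral>z. ?b z \<partial>D)"
    by (rule order_trans[OF integral_abs_bound integral_mono]) (use i ib pb in auto)
  also have "\<dots> = 2 * M * ((\<integral>z. \<bar>c - fst z / sqrt 2 - u0 (snd z)\<bar> powr (-s) \<partial>D) + (\<integral>z. \<bar>c - fst z / sqrt 2 - u1 (snd z)\<bar> powr (-s) \<partial>D))"
    using negpow_int by (simp add: Bochner_Integration.integral_add)
  also have "\<dots> \<le> 2 * M * ((Cs 1 + 1) + (Cs 1 + 1))"
    using negpow_int M0 by (intro mult_left_mono add_mono) auto
  also have "\<dots> = 4 * M * (Cs 1 + 1)" by (simp add: algebra_simps)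
  finally show "\<bar>\<integral>z. Phi s G (c - fst z / sqrt 2 - u0 (snd z)) (c - fst z / sqrt 2 - u1 (snd z)) \<partial>D\<bar> \<le> 4 * M * (Cs 1 + 1)"
    by simp
qed


lemma AE_D: "AE p in sig. Q p \<Longrightarrow> {p \<in> space sig. Q p} \<in> sets sig \<Longrightarrow> AE z in D. Q (snd z)"
proof -
  assume ae: "AE p in sig. Q p" and m: "{p \<in> space sig. Q p} \<in> sets sig"
  have "{z \<in> space D. Q (snd z)} = space P \<times> {p \<in> space sig. Q p}" by (auto simp: space_pair_measure)
  hence ms: "{z \<in> space D. Q (snd z)} \<in> sets D" using m by simp
  show ?thesis by (rule pp.AE_pair_measure[OF ms]) (auto intro!: AE_I2 ae)
qed

lemma GL_fixed:
  assumes [measurable]: "G \<in> borel_measurable borel" "u0 \<in> borel_measurable sig" "u1 \<in> borel_measurable sig"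
    and G: "\<And>x. \<bar>G x\<bar> \<le> M"
    and cont: "\<And>u v. \<bar>u - v\<bar> \<le> 2 * \<kappa> / \<delta>^2 \<Longrightarrow> \<bar>G u - G v\<bar> \<le> \<eta>"
    and d: "0 < \<delta>" and k: "0 \<le> \<kappa>" "2 * \<kappa> \<le> \<delta>"
    and ae: "AE p in sig. \<bar>u0 p\<bar> \<le> \<kappa> \<and> \<bar>u1 p\<bar> \<le> \<kappa>"
  shows "\<bar>(\<integral>z. Phi s G (c - fst z / sqrt 2 - u0 (snd z)) (c - fst z / sqrt 2 - u1 (snd z)) \<partial>D)
          - (\<integral>z. Phi s G (c - fst z / sqrt 2) (c - fst z / sqrt 2) \<partial>D)\<bar>
     \<le> 4 * M * Cs (2 * \<delta>) + 4 * M * Cs \<delta> + (M * (4 * \<kappa> / \<delta>^2) powr s + \<eta> * (2 / \<delta>) powr s + M * (2 * \<kappa> / \<delta>^2) powr s)"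
proof -
  have M0: "0 \<le> M" using G[of 0] by (meson abs_ge_zero order_trans)
  have eta0: "0 \<le> \<eta>" using cont[of 0 0] k d by (simp add: divide_nonneg_pos)
  define K where "K = M * (4 * \<kappa> / \<delta>^2) powr s + \<eta> * (2 / \<delta>) powr s + M * (2 * \<kappa> / \<delta>^2) powr s"
  have K0: "0 \<le> K" unfolding K_def using M0 eta0 by auto
  define A where "A = (\<lambda>z. c - fst z / sqrt 2 - u0 (snd z))"
  define Bb where "Bb = (\<lambda>z. c - fst z / sqrt 2 - u1 (snd z))"
  define Y where "Y = (\<lambda>z::real \<times> real \<times> real. c - fst z / sqrt 2)"
  have [measurable]: "A \<in> borel_measurable D" "Bb \<in> borel_measurable D" "Y \<in> borel_measurable D"
    unfolding A_def Bb_def Y_def by measurable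
  define bnd where "bnd = (\<lambda>z. 2 * M * (sing s (2*\<delta>) (A z) + sing s (2*\<delta>) (Bb z)) + 4 * M * sing s \<delta> (Y z) + K)"
  have i1: "integrable D (\<lambda>z. Phi s G (A z) (Bb z))" unfolding A_def Bb_def by (rule Phi_int[OF _ _ _ G]) auto
  have i0: "integrable D (\<lambda>z. Phi s G (Y z) (Y z))" unfolding Y_def using Phi_int(1)[of G "\<lambda>_. 0" "\<lambda>_. 0" M c, OF _ _ _ G] by simp
  have sA: "integrable D (\<lambda>z. sing s (2*\<delta>) (A z))" "(\<integral>z. sing s (2*\<delta>) (A z) \<partial>D) \<le> Cs (2*\<delta>)"
    unfolding A_def using D_sing[of "2*\<delta>" u0 c] d by auto
  have sB: "integrable D (\<lambda>z. sing s (2*\<delta>) (Bb z))" "(\<integral>z. sing s (2*\<delta>) (Bb z) \<partial>D) \<le> Cs (2*\<delta>)"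
    unfolding Bb_def using D_sing[of "2*\<delta>" u1 c] d by auto
  have sY: "integrable D (\<lambda>z. sing s \<delta> (Y z))" "(\<integral>z. sing s \<delta> (Y z) \<partial>D) \<le> Cs \<delta>"
    unfolding Y_def using D_sing[of "\<delta>" "\<lambda>_. 0" c] d by auto
  have ib: "integrable D bnd" unfolding bnd_def using sA sB sY
    by (intro Bochner_Integration.integrable_add Bochner_Integration.integrable_mult_right pp.integrable_const) auto
  have pw: "\<bar>Phi s G (A z) (Bb z) - Phi s G (Y z) (Y z)\<bar> \<le> bnd z"
    if u: "\<bar>u0 (snd z)\<bar> \<le> \<kappa>" "\<bar>u1 (snd z)\<bar> \<le> \<kappa>" for z
  proof -
    have AY: "\<bar>A z - Y z\<bar> \<le> \<kappa>" "\<bar>Bb z - Y z\<bar> \<le> \<kappa>" using u by (auto simp: A_def Bb_def Y_def)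
    have sn: "0 \<le> sing s r x" for r x by (rule sing_nonneg)
    show ?thesis
    proof (cases "\<bar>Y z\<bar> < \<delta>")
      case True
      have "\<bar>A z\<bar> \<le> 2 * \<delta>" "\<bar>Bb z\<bar> \<le> 2 * \<delta>" using AY True k by linarith+
      hence eqA: "\<bar>A z\<bar> powr (-s) = sing s (2*\<delta>) (A z)" "\<bar>Bb z\<bar> powr (-s) = sing s (2*\<delta>) (Bb z)"
        by (auto simp: sing_def indicator_def abs_le_iff)
      have eqY: "\<bar>Y z\<bar> powr (-s) = sing s \<delta> (Y z)" using True by (auto simp: sing_def indicator_def abs_le_iff)
      have b1: "\<bar>Phi s G (A z) (Bb z)\<bar> \<le> 2 * M * (sing s (2*\<delta>) (A z) + sing s (2*\<delta>) (Bb z))"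
        using Phi_bound[where G=G and M=M and a="A z" and b="Bb z" and s=s, OF G] s_pos eqA by simp
      have b0: "\<bar>Phi s G (Y z) (Y z)\<bar> \<le> 4 * M * sing s \<delta> (Y z)"
        using Phi_bound[where G=G and M=M and a="Y z" and b="Y z" and s=s, OF G] s_pos eqY by simp
      show ?thesis unfolding bnd_def using b1 b0 K0 by linarith
    next
      case False
      have "\<bar>Phi s G (A z) (Bb z) - Phi s G (Y z) (Y z)\<bar> \<le> K"
        unfolding K_def using False d k AY s_pos s_lt
        by (intro Phi_local[OF G cont]) auto
      moreover have "0 \<le> 2 * M * (sing s (2*\<delta>) (A z) + sing s (2*\<delta>) (Bb z)) + 4 * M * sing s \<delta> (Y z)"
        using M0 sn by auto
      ultimately show ?thesis unfolding bnd_def by linarith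
    qed
  qed
  have aeD: "AE z in D. \<bar>u0 (snd z)\<bar> \<le> \<kappa> \<and> \<bar>u1 (snd z)\<bar> \<le> \<kappa>"
    by (rule AE_D[OF ae]) measurable
  have "\<bar>(\<integral>z. Phi s G (A z) (Bb z) \<partial>D) - (\<integral>z. Phi s G (Y z) (Y z) \<partial>D)\<bar>
      = \<bar>\<integral>z. Phi s G (A z) (Bb z) - Phi s G (Y z) (Y z) \<partial>D\<bar>"
    using i1 i0 by (simp add: Bochner_Integration.integral_diff)
  also have "\<dots> \<le> (\<integral>z. \<bar>Phi s G (A z) (Bb z) - Phi s G (Y z) (Y z)\<bar> \<partial>D)" by (rule integral_abs_bound)
  also have "\<dots> \<le> (\<integral>z. bnd z \<partial>D)"
    using aeD pw i1 i0 ib by (intro integral_mono_AE) (auto intro: Bochner_Integration.integrable_diff)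
  also have "(\<integral>z. bnd z \<partial>D) = 2 * M * ((\<integral>z. sing s (2*\<delta>) (A z) \<partial>D) + (\<integral>z. sing s (2*\<delta>) (Bb z) \<partial>D)) + 4 * M * (\<integral>z. sing s \<delta> (Y z) \<partial>D) + K"
    unfolding bnd_def using sA sB sY 
    by (simp add: Bochner_Integration.integral_add pp.integrable_const pp.prob_space Bochner_Integration.integrable_add)
  also have "\<dots> \<le> 2 * M * (Cs (2*\<delta>) + Cs (2*\<delta>)) + 4 * M * Cs \<delta> + K"
    using sA sB sY M0 by (intro add_mono mult_left_mono) auto
  finally show ?thesis unfolding A_def Bb_def Y_def K_def by (simp add: algebra_simps)
qed


lemma powr_small:
  fixes p e C :: real assumes "0 < p" "0 < e" "0 \<le> C"
  shows "\<exists>b>0. \<forall>x. 0 \<le> x \<longrightarrow> x \<le> b \<longrightarrow> C * x powr p \<le> e"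
proof (intro exI[of _ "(e / (C + 1)) powr (1/p)"] conjI allI impI)
  show "0 < (e / (C + 1)) powr (1/p)" using assms by simp
  fix x assume x: "0 \<le> x" "x \<le> (e / (C + 1)) powr (1/p)"
  have "x powr p \<le> ((e / (C + 1)) powr (1/p)) powr p" using x assms by (intro powr_mono2) auto
  also have "\<dots> = e / (C + 1)" using assms by (simp add: powr_powr)
  finally have "C * x powr p \<le> C * (e / (C + 1))" using assms by (intro mult_left_mono) auto
  also have "\<dots> \<le> e" using assms by (simp add: field_simps)
  finally show "C * x powr p \<le> e" .
qed

lemma Cs_eq: "Cs \<rho> = (B * sqrt 2 * 2 / (1 - s)) * \<rho> powr (1 - s)"
  unfolding Cs_def by simp

lemma GL:
  assumes S_meas: "\<And>G. G \<in> S \<Longrightarrow> G \<in> borel_measurable borel"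
    and S_bd: "\<And>G x. G \<in> S \<Longrightarrow> \<bar>G x\<bar> \<le> M" and M0: "0 \<le> M"
    and equi: "\<And>e. 0 < e \<Longrightarrow> \<exists>\<theta>>0. \<forall>G\<in>S. \<forall>u v. \<bar>u - v\<bar> < \<theta> \<longrightarrow> \<bar>G u - G v\<bar> \<le> e"
    and eps: "0 < \<epsilon>"
  shows "\<exists>\<kappa>0>0. \<forall>\<kappa> G c u0 u1. 0 \<le> \<kappa> \<longrightarrow> \<kappa> \<le> \<kappa>0 \<longrightarrow> G \<in> S \<longrightarrow> u0 \<in> borel_measurable sig \<longrightarrow> u1 \<in> borel_measurable sig
      \<longrightarrow> (AE p in sig. \<bar>u0 p\<bar> \<le> \<kappa> \<and> \<bar>u1 p\<bar> \<le> \<kappa>) \<longrightarrow>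
      \<bar>(\<integral>z. Phi s G (c - fst z / sqrt 2 - u0 (snd z)) (c - fst z / sqrt 2 - u1 (snd z)) \<partial>D)
          - (\<integral>z. Phi s G (c - fst z / sqrt 2) (c - fst z / sqrt 2) \<partial>D)\<bar> \<le> \<epsilon>"
proof -
  define C1 where "C1 = 4 * M * (B * sqrt 2 * 2 / (1 - s))"
  have C1: "0 \<le> C1" unfolding C1_def using M0 B_nonneg s_lt by simp
  obtain b where b: "b > 0" "\<And>x. 0 \<le> x \<Longrightarrow> x \<le> b \<Longrightarrow> C1 * x powr (1 - s) \<le> \<epsilon> / 4"
    using powr_small[of "1 - s" "\<epsilon>/4" C1] s_lt eps C1 by auto
  define \<delta> where "\<delta> = b / 2"
  have d: "0 < \<delta>" unfolding \<delta>_def using b by simp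
  have part1: "4 * M * Cs (2 * \<delta>) + 4 * M * Cs \<delta> \<le> \<epsilon> / 2"
  proof -
    have "4 * M * Cs (2 * \<delta>) = C1 * (2 * \<delta>) powr (1 - s)" "4 * M * Cs \<delta> = C1 * \<delta> powr (1 - s)"
      unfolding Cs_eq C1_def by simp_all
    moreover have "C1 * (2 * \<delta>) powr (1 - s) \<le> \<epsilon> / 4" "C1 * \<delta> powr (1 - s) \<le> \<epsilon> / 4"
      using b d unfolding \<delta>_def by auto
    ultimately show ?thesis by simp
  qed
  define \<eta> where "\<eta> = (\<epsilon> / 6) / (2 / \<delta>) powr s"
  have eta: "0 < \<eta>" "\<eta> * (2 / \<delta>) powr s = \<epsilon> / 6" unfolding \<eta>_def using eps d by auto
  obtain \<theta> where th: "\<theta> > 0" "\<And>G u v. G \<in> S \<Longrightarrow> \<bar>u - v\<bar> < \<theta> \<Longrightarrow> \<bar>G u - G v\<bar> \<le> \<eta>"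
    using equi[OF eta(1)] by blast
  define C2 where "C2 = M * (4 / \<delta>^2) powr s"
  have C2: "0 \<le> C2" unfolding C2_def using M0 by simp
  obtain b2 where b2: "b2 > 0" "\<And>x. 0 \<le> x \<Longrightarrow> x \<le> b2 \<Longrightarrow> C2 * x powr s \<le> \<epsilon> / 6"
    using powr_small[of s "\<epsilon>/6" C2] s_pos eps C2 by auto
  define \<kappa>0 where "\<kappa>0 = min b2 (min (\<delta> / 2) (\<theta> * \<delta>^2 / 4))"
  have k0a: "0 < \<kappa>0" "\<kappa>0 \<le> b2" "2 * \<kappa>0 \<le> \<delta>" "\<kappa>0 \<le> \<theta> * \<delta>^2 / 4"
    unfolding \<kappa>0_def using b2 d th by auto
  have "2 * \<kappa>0 / \<delta>^2 \<le> 2 * (\<theta> * \<delta>^2 / 4) / \<delta>^2" using k0a d by (intro divide_right_mono) auto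
  also have "\<dots> = \<theta> / 2" using d by (simp add: field_simps)
  finally have "2 * \<kappa>0 / \<delta>^2 < \<theta>" using th by linarith
  note k0 = k0a(1-3) this
  show ?thesis
  proof (intro exI[of _ \<kappa>0] conjI allI impI k0(1))
    fix \<kappa> G c and u0 u1 :: "real \<times> real \<Rightarrow> real"
    assume k: "0 \<le> \<kappa>" "\<kappa> \<le> \<kappa>0" and G: "G \<in> S" and m: "u0 \<in> borel_measurable sig" "u1 \<in> borel_measurable sig"
      and ae: "AE p in sig. \<bar>u0 p\<bar> \<le> \<kappa> \<and> \<bar>u1 p\<bar> \<le> \<kappa>"
    have cont: "\<bar>G u - G v\<bar> \<le> \<eta>" if "\<bar>u - v\<bar> \<le> 2 * \<kappa> / \<delta>^2" for u v
    proof -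
      have "2 * \<kappa> / \<delta>^2 \<le> 2 * \<kappa>0 / \<delta>^2" using k d by (intro divide_right_mono) auto
      hence "\<bar>u - v\<bar> < \<theta>" using that k0 by linarith
      thus ?thesis using th(2)[OF G] by blast
    qed
    have "\<bar>(\<integral>z. Phi s G (c - fst z / sqrt 2 - u0 (snd z)) (c - fst z / sqrt 2 - u1 (snd z)) \<partial>D)
          - (\<integral>z. Phi s G (c - fst z / sqrt 2) (c - fst z / sqrt 2) \<partial>D)\<bar>
     \<le> 4 * M * Cs (2 * \<delta>) + 4 * M * Cs \<delta> + (M * (4 * \<kappa> / \<delta>^2) powr s + \<eta> * (2 / \<delta>) powr s + M * (2 * \<kappa> / \<delta>^2) powr s)"
      using k k0 by (intro GL_fixed[OF S_meas[OF G] m _ cont d _ _ ae] S_bd[OF G]) auto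
    also have "\<dots> \<le> \<epsilon>"
    proof -
      have e1: "M * (4 * \<kappa> / \<delta>^2) powr s \<le> \<epsilon> / 6"
      proof -
        have "M * (4 * \<kappa> / \<delta>^2) powr s = C2 * \<kappa> powr s"
          unfolding C2_def using k d by (simp add: powr_mult[symmetric] field_simps)
        also have "\<dots> \<le> \<epsilon> / 6" using b2 k k0 by auto
        finally show ?thesis .
      qed
      have "M * (2 * \<kappa> / \<delta>^2) powr s \<le> M * (4 * \<kappa> / \<delta>^2) powr s"
        using k d M0 s_pos by (intro mult_left_mono powr_mono2 divide_right_mono) auto
      thus ?thesis using e1 part1 eta by linarith
    qed
    finally show "\<bar>(\<integral>z. Phi s G (c - fst z / sqrt 2 - u0 (snd z)) (c - fst z / sqrt 2 - u1 (snd z)) \<partial>D)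
          - (\<integral>z. Phi s G (c - fst z / sqrt 2) (c - fst z / sqrt 2) \<partial>D)\<bar> \<le> \<epsilon>" .
  qed
qed

end


lemma T_None: "T_op nu sig \<kappa> E s g None = 0" by (simp add: T_op_def)

lemma T_Some: "T_op nu sig \<kappa> E s g (Some x) =
  (\<integral>q. Phi s (\<lambda>t. g (Some t)) (x + (E - fst q) / sqrt 2) (x + (E - snd q) / sqrt 2) \<partial>mu nu sig \<kappa>)"
  unfolding T_op_def option.case by (intro Bochner_Integration.integral_cong refl)
    (auto simp: phi_plus_def phi_minus_def opt_abs_def Phi_def phip_def phim_def)

context setting
begin

lemma sig_fst[measurable]: "fst \<in> borel_measurable sig" and sig_snd[measurable]: "snd \<in> borel_measurable sig"
  unfolding measurable_cong_sets[OF sets_sig refl]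
  by (auto intro!: borel_measurable_continuous_onI continuous_intros)

lemma T_D:
  assumes G[measurable]: "(\<lambda>t. g (Some t)) \<in> borel_measurable borel"
  shows "T_op nu sig \<kappa> E s g (Some x) =
    (\<integral>z. Phi s (\<lambda>t. g (Some t)) (x + E / sqrt 2 - fst z / sqrt 2 - \<kappa> * fst (snd z) / sqrt 2)
                                 (x + E / sqrt 2 - fst z / sqrt 2 - \<kappa> * snd (snd z) / sqrt 2) \<partial>D)"
proof -
  have mm: "(\<lambda>(r, p). (r + \<kappa> * fst p, r + \<kappa> * snd p)) \<in> measurable D borel"
    unfolding borel_prod[symmetric] by measurable
  have mf: "(\<lambda>q. Phi s (\<lambda>t. g (Some t)) (x + (E - fst q) / sqrt 2) (x + (E - snd q) / sqrt 2)) \<in> borel_measurable borel"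
    by measurable
  have eq: "x + (E - (r + \<kappa> * a)) / sqrt 2 = x + E / sqrt 2 - r / sqrt 2 - \<kappa> * a / sqrt 2" for r a
    by (simp add: diff_divide_distrib add_divide_distrib)
  show ?thesis
    unfolding T_Some mu_def integral_distr[OF mm mf]
    by (intro Bochner_Integration.integral_cong refl) (simp add: case_prod_beta eq)
qed


lemma T_meas:
  assumes [measurable]: "(\<lambda>t. g (Some t)) \<in> borel_measurable borel"
  shows "(\<lambda>x. T_op nu sig \<kappa> E s g (Some x)) \<in> borel_measurable borel"
  unfolding T_D[OF assms] by measurable

lemma T_bound:
  assumes [measurable]: "(\<lambda>t. g (Some t)) \<in> borel_measurable borel" and b: "\<And>t. \<bar>g (Some t)\<bar> \<le> M"
  shows "\<bar>T_op nu sig \<kappa> E s g (Some x)\<bar> \<le> 4 * M * (Cs 1 + 1)"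
  unfolding T_D[OF assms(1)]
  using Phi_int(2)[of "\<lambda>t. g (Some t)" "\<lambda>p. \<kappa> * fst p / sqrt 2" "\<lambda>p. \<kappa> * snd p / sqrt 2" M "x + E / sqrt 2", OF _ _ _ b]
  by simp

lemma T_int:
  assumes [measurable]: "(\<lambda>t. g (Some t)) \<in> borel_measurable borel" and b: "\<And>t. \<bar>g (Some t)\<bar> \<le> M"
  shows "integrable D (\<lambda>z. Phi s (\<lambda>t. g (Some t)) (x + E / sqrt 2 - fst z / sqrt 2 - \<kappa> * fst (snd z) / sqrt 2)
                                 (x + E / sqrt 2 - fst z / sqrt 2 - \<kappa> * snd (snd z) / sqrt 2))"
  using Phi_int(1)[of "\<lambda>t. g (Some t)" "\<lambda>p. \<kappa> * fst p / sqrt 2" "\<lambda>p. \<kappa> * snd p / sqrt 2" M "x + E / sqrt 2", OF _ _ _ b]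
  by simp

end


context setting
begin

lemma AE_sig_u: "0 \<le> \<kappa> \<Longrightarrow> AE p in sig. \<bar>\<kappa> * fst p / sqrt 2\<bar> \<le> \<kappa> \<and> \<bar>\<kappa> * snd p / sqrt 2\<bar> \<le> \<kappa>"
proof -
  assume k: "0 \<le> \<kappa>"
  have *: "\<bar>\<kappa> * a / sqrt 2\<bar> \<le> \<kappa>" if "\<bar>a\<bar> \<le> 1" for a
  proof -
    have "\<bar>\<kappa> * a / sqrt 2\<bar> = \<kappa> * \<bar>a\<bar> / sqrt 2" using k by (simp add: abs_mult)
    also have "\<dots> \<le> \<kappa> * 1 / 1" using k that by (intro frac_le mult_left_mono) auto
    finally show ?thesis by simp
  qed
  show ?thesis by (rule AE_mp[OF sig_box AE_I2]) (use * in blast)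
qed

lemma step_equi:
  assumes m: "\<And>E. (\<lambda>t. g E (Some t)) \<in> borel_measurable borel"
    and b: "\<And>E t. \<bar>g E (Some t)\<bar> \<le> M" and M0: "0 \<le> M"
    and equi: "\<And>e. 0 < e \<Longrightarrow> \<exists>\<theta>>0. \<forall>E u v. \<bar>u - v\<bar> < \<theta> \<longrightarrow> \<bar>g E (Some u) - g E (Some v)\<bar> \<le> e"
    and e: "0 < e"
  shows "\<exists>\<theta>>0. \<forall>E u v. \<bar>u - v\<bar> < \<theta> \<longrightarrow> \<bar>T_op nu sig 0 E s (g E) (Some u) - T_op nu sig 0 E s (g E) (Some v)\<bar> \<le> e"
proof -
  define S where "S = range (\<lambda>E t. g E (Some t))"
  have "\<exists>\<kappa>0>0. \<forall>\<kappa> G c u0 u1. 0 \<le> \<kappa> \<longrightarrow> \<kappa> \<le> \<kappa>0 \<longrightarrow> G \<in> S \<longrightarrow> u0 \<in> borel_measurable sig \<longrightarrow> u1 \<in> borel_measurable sig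
      \<longrightarrow> (AE p in sig. \<bar>u0 p\<bar> \<le> \<kappa> \<and> \<bar>u1 p\<bar> \<le> \<kappa>) \<longrightarrow>
      \<bar>(\<integral>z. Phi s G (c - fst z / sqrt 2 - u0 (snd z)) (c - fst z / sqrt 2 - u1 (snd z)) \<partial>D)
          - (\<integral>z. Phi s G (c - fst z / sqrt 2) (c - fst z / sqrt 2) \<partial>D)\<bar> \<le> e"
    by (rule GL[OF _ _ M0 _ e]) (use m b equi in \<open>auto simp: S_def\<close>)
  then obtain \<kappa>0 where k0: "\<kappa>0 > 0" and H: "\<And>\<kappa> G c u0 u1. 0 \<le> \<kappa> \<Longrightarrow> \<kappa> \<le> \<kappa>0 \<Longrightarrow> G \<in> S \<Longrightarrow> u0 \<in> borel_measurable sig \<Longrightarrow> u1 \<in> borel_measurable sig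
      \<Longrightarrow> (AE p in sig. \<bar>u0 p\<bar> \<le> \<kappa> \<and> \<bar>u1 p\<bar> \<le> \<kappa>) \<Longrightarrow>
      \<bar>(\<integral>z. Phi s G (c - fst z / sqrt 2 - u0 (snd z)) (c - fst z / sqrt 2 - u1 (snd z)) \<partial>D)
          - (\<integral>z. Phi s G (c - fst z / sqrt 2) (c - fst z / sqrt 2) \<partial>D)\<bar> \<le> e"
    by blast
  show ?thesis
  proof (intro exI[of _ \<kappa>0] conjI allI impI k0)
    fix E u v :: real assume uv: "\<bar>u - v\<bar> < \<kappa>0"
    have eq: "v + E / sqrt 2 - r - (v - u) = u + E / sqrt 2 - r" for r by simp
    have "\<bar>(\<integral>z. Phi s (\<lambda>t. g E (Some t)) (v + E / sqrt 2 - fst z / sqrt 2 - (v - u)) (v + E / sqrt 2 - fst z / sqrt 2 - (v - u)) \<partial>D)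
          - (\<integral>z. Phi s (\<lambda>t. g E (Some t)) (v + E / sqrt 2 - fst z / sqrt 2) (v + E / sqrt 2 - fst z / sqrt 2) \<partial>D)\<bar> \<le> e"
      using H[of "\<bar>v - u\<bar>" "\<lambda>t. g E (Some t)" "\<lambda>_. v - u" "\<lambda>_. v - u" "v + E / sqrt 2"] uv
      by (auto simp: S_def)
    thus "\<bar>T_op nu sig 0 E s (g E) (Some u) - T_op nu sig 0 E s (g E) (Some v)\<bar> \<le> e"
      unfolding T_D[OF m] by (simp only: eq mult_zero_left div_0 diff_zero)
  qed
qed


lemma step_conv:
  assumes m: "\<And>\<kappa> E. (\<lambda>t. g \<kappa> E (Some t)) \<in> borel_measurable borel"
    and b: "\<And>\<kappa> E t. \<bar>g \<kappa> E (Some t)\<bar> \<le> M" and M0: "0 \<le> M"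
    and equi: "\<And>e. 0 < e \<Longrightarrow> \<exists>\<theta>>0. \<forall>E u v. \<bar>u - v\<bar> < \<theta> \<longrightarrow> \<bar>g 0 E (Some u) - g 0 E (Some v)\<bar> \<le> e"
    and conv: "\<And>\<epsilon>. 0 < \<epsilon> \<Longrightarrow> \<exists>\<kappa>0>0. \<forall>\<kappa> E x. 0 < \<kappa> \<longrightarrow> \<kappa> \<le> \<kappa>0 \<longrightarrow> \<bar>g \<kappa> E (Some x) - g 0 E (Some x)\<bar> \<le> \<epsilon>"
    and e: "0 < \<epsilon>"
  shows "\<exists>\<kappa>0>0. \<forall>\<kappa> E x. 0 < \<kappa> \<longrightarrow> \<kappa> \<le> \<kappa>0 \<longrightarrow>
           \<bar>T_op nu sig \<kappa> E s (g \<kappa> E) (Some x) - T_op nu sig 0 E s (g 0 E) (Some x)\<bar> \<le> \<epsilon>"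
proof -
  define S where "S = range (\<lambda>E t. g 0 E (Some t))"
  have C0: "0 < 4 * (Cs 1 + 1)" using Cs_nonneg[of 1] by simp
  define \<epsilon>1 where "\<epsilon>1 = \<epsilon> / 2 / (4 * (Cs 1 + 1))"
  have e1: "0 < \<epsilon>1" unfolding \<epsilon>1_def using C0 e by simp
  have e1': "4 * \<epsilon>1 * (Cs 1 + 1) = \<epsilon> / 2" unfolding \<epsilon>1_def using C0 by (simp add: field_simps)
  obtain \<kappa>1 where k1: "\<kappa>1 > 0" "\<And>\<kappa> E x. 0 < \<kappa> \<Longrightarrow> \<kappa> \<le> \<kappa>1 \<Longrightarrow> \<bar>g \<kappa> E (Some x) - g 0 E (Some x)\<bar> \<le> \<epsilon>1"
    using conv[OF e1] by blast
  have "\<exists>\<kappa>0>0. \<forall>\<kappa> G c u0 u1. 0 \<le> \<kappa> \<longrightarrow> \<kappa> \<le> \<kappa>0 \<longrightarrow> G \<in> S \<longrightarrow> u0 \<in> borel_measurable sig \<longrightarrow> u1 \<in> borel_measurable sig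
      \<longrightarrow> (AE p in sig. \<bar>u0 p\<bar> \<le> \<kappa> \<and> \<bar>u1 p\<bar> \<le> \<kappa>) \<longrightarrow>
      \<bar>(\<integral>z. Phi s G (c - fst z / sqrt 2 - u0 (snd z)) (c - fst z / sqrt 2 - u1 (snd z)) \<partial>D)
          - (\<integral>z. Phi s G (c - fst z / sqrt 2) (c - fst z / sqrt 2) \<partial>D)\<bar> \<le> \<epsilon> / 2"
    by (rule GL[OF _ _ M0 _]) (use m b equi e in \<open>auto simp: S_def\<close>)
  then obtain \<kappa>2 where k2: "\<kappa>2 > 0" and H: "\<And>\<kappa> G c u0 u1. 0 \<le> \<kappa> \<Longrightarrow> \<kappa> \<le> \<kappa>2 \<Longrightarrow> G \<in> S \<Longrightarrow> u0 \<in> borel_measurable sig \<Longrightarrow> u1 \<in> borel_measurable sig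
      \<Longrightarrow> (AE p in sig. \<bar>u0 p\<bar> \<le> \<kappa> \<and> \<bar>u1 p\<bar> \<le> \<kappa>) \<Longrightarrow>
      \<bar>(\<integral>z. Phi s G (c - fst z / sqrt 2 - u0 (snd z)) (c - fst z / sqrt 2 - u1 (snd z)) \<partial>D)
          - (\<integral>z. Phi s G (c - fst z / sqrt 2) (c - fst z / sqrt 2) \<partial>D)\<bar> \<le> \<epsilon> / 2"
    by blast
  show ?thesis
  proof (intro exI[of _ "min \<kappa>1 \<kappa>2"] conjI allI impI)
    show "0 < min \<kappa>1 \<kappa>2" using k1 k2 by simp
    fix \<kappa> E x :: real assume k: "0 < \<kappa>" "\<kappa> \<le> min \<kappa>1 \<kappa>2"
    define c where "c = x + E / sqrt 2"
    define G1 where "G1 = (\<lambda>t. g \<kappa> E (Some t))"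
    define G0 where "G0 = (\<lambda>t. g 0 E (Some t))"
    have [measurable]: "G1 \<in> borel_measurable borel" "G0 \<in> borel_measurable borel" using m by (auto simp: G1_def G0_def)
    define I1 where "I1 = (\<integral>z. Phi s G1 (c - fst z / sqrt 2 - \<kappa> * fst (snd z) / sqrt 2) (c - fst z / sqrt 2 - \<kappa> * snd (snd z) / sqrt 2) \<partial>D)"
    define I2 where "I2 = (\<integral>z. Phi s G0 (c - fst z / sqrt 2 - \<kappa> * fst (snd z) / sqrt 2) (c - fst z / sqrt 2 - \<kappa> * snd (snd z) / sqrt 2) \<partial>D)"
    define I0 where "I0 = (\<integral>z. Phi s G0 (c - fst z / sqrt 2) (c - fst z / sqrt 2) \<partial>D)"
    have T1: "T_op nu sig \<kappa> E s (g \<kappa> E) (Some x) = I1" unfolding T_D[OF m] I1_def c_def G1_def ..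
    have T0: "T_op nu sig 0 E s (g 0 E) (Some x) = I0" unfolding T_D[OF m] I0_def c_def G0_def
      by (simp only: mult_zero_left div_0 diff_zero)
    have i1: "integrable D (\<lambda>z. Phi s G1 (c - fst z / sqrt 2 - \<kappa> * fst (snd z) / sqrt 2) (c - fst z / sqrt 2 - \<kappa> * snd (snd z) / sqrt 2))"
      unfolding G1_def c_def by (rule T_int[OF m b])
    have i2: "integrable D (\<lambda>z. Phi s G0 (c - fst z / sqrt 2 - \<kappa> * fst (snd z) / sqrt 2) (c - fst z / sqrt 2 - \<kappa> * snd (snd z) / sqrt 2))"
      unfolding G0_def c_def by (rule T_int[OF m b])
    have "I1 - I2 = (\<integral>z. Phi s (\<lambda>t. G1 t - G0 t) (c - fst z / sqrt 2 - \<kappa> * fst (snd z) / sqrt 2) (c - fst z / sqrt 2 - \<kappa> * snd (snd z) / sqrt 2) \<partial>D)"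
      unfolding I1_def I2_def Phi_diff[symmetric] by (rule Bochner_Integration.integral_diff[OF i1 i2, symmetric])
    also have "\<bar>\<dots>\<bar> \<le> 4 * \<epsilon>1 * (Cs 1 + 1)"
    proof -
      have bd: "\<bar>G1 t - G0 t\<bar> \<le> \<epsilon>1" for t unfolding G1_def G0_def using k1(2)[of \<kappa> E t] k by simp
      show ?thesis
        using Phi_int(2)[of "\<lambda>t. G1 t - G0 t" "\<lambda>p. \<kappa> * fst p / sqrt 2" "\<lambda>p. \<kappa> * snd p / sqrt 2" \<epsilon>1 c, OF _ _ _ bd]
        by simp
    qed
    finally have d1: "\<bar>I1 - I2\<bar> \<le> \<epsilon> / 2" using e1' by simp
    have d2: "\<bar>I2 - I0\<bar> \<le> \<epsilon> / 2"
      unfolding I2_def I0_def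
      using H[of \<kappa> G0 "\<lambda>p. \<kappa> * fst p / sqrt 2" "\<lambda>p. \<kappa> * snd p / sqrt 2" c] k AE_sig_u[of \<kappa>]
      by (auto simp: S_def G0_def)
    show "\<bar>T_op nu sig \<kappa> E s (g \<kappa> E) (Some x) - T_op nu sig 0 E s (g 0 E) (Some x)\<bar> \<le> \<epsilon>"
      unfolding T1 T0 using d1 d2 by linarith
  qed
qed


lemma main_ind:
  fixes f :: "real option \<Rightarrow> real"
  assumes fm: "(\<lambda>t. f (Some t)) \<in> borel_measurable borel"
    and fb: "\<And>t. \<bar>f (Some t)\<bar> \<le> Mf"
    and fuc: "\<And>e. 0 < e \<Longrightarrow> \<exists>\<theta>>0. \<forall>u v. \<bar>u - v\<bar> < \<theta> \<longrightarrow> \<bar>f (Some u) - f (Some v)\<bar> \<le> e"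
  shows "(\<forall>\<kappa> E. (\<lambda>x. (T_op nu sig \<kappa> E s ^^ m) f (Some x)) \<in> borel_measurable borel)
   \<and> (\<exists>M\<ge>0. \<forall>\<kappa> E x. \<bar>(T_op nu sig \<kappa> E s ^^ m) f (Some x)\<bar> \<le> M)
   \<and> (\<forall>e>0. \<exists>\<theta>>0. \<forall>E u v. \<bar>u - v\<bar> < \<theta> \<longrightarrow> \<bar>(T_op nu sig 0 E s ^^ m) f (Some u) - (T_op nu sig 0 E s ^^ m) f (Some v)\<bar> \<le> e)
   \<and> (\<forall>\<epsilon>>0. \<exists>\<kappa>0>0. \<forall>\<kappa> E x. 0 < \<kappa> \<longrightarrow> \<kappa> \<le> \<kappa>0 \<longrightarrow> \<bar>(T_op nu sig \<kappa> E s ^^ m) f (Some x) - (T_op nu sig 0 E s ^^ m) f (Some x)\<bar> \<le> \<epsilon>)"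
proof (induction m)
  case 0
  have "0 \<le> Mf" using fb[of 0] by (meson abs_ge_zero order_trans)
  thus ?case using fm fb fuc by (auto intro: exI[of _ 1])
next
  case (Suc m)
  define g where "g = (\<lambda>\<kappa> E. (T_op nu sig \<kappa> E s ^^ m) f)"
  have gS: "(T_op nu sig \<kappa> E s ^^ Suc m) f = T_op nu sig \<kappa> E s (g \<kappa> E)" for \<kappa> E by (simp add: g_def)
  have m: "\<And>\<kappa> E. (\<lambda>t. g \<kappa> E (Some t)) \<in> borel_measurable borel" using Suc.IH by (simp add: g_def)
  obtain M where M0: "0 \<le> M" and b: "\<And>\<kappa> E t. \<bar>g \<kappa> E (Some t)\<bar> \<le> M" using Suc.IH by (auto simp: g_def)
  have equi: "\<And>e. 0 < e \<Longrightarrow> \<exists>\<theta>>0. \<forall>E u v. \<bar>u - v\<bar> < \<theta> \<longrightarrow> \<bar>g 0 E (Some u) - g 0 E (Some v)\<bar> \<le> e"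
    using Suc.IH by (simp add: g_def)
  have conv: "\<And>\<epsilon>. 0 < \<epsilon> \<Longrightarrow> \<exists>\<kappa>0>0. \<forall>\<kappa> E x. 0 < \<kappa> \<longrightarrow> \<kappa> \<le> \<kappa>0 \<longrightarrow> \<bar>g \<kappa> E (Some x) - g 0 E (Some x)\<bar> \<le> \<epsilon>"
    using Suc.IH by (simp add: g_def)
  have A: "\<forall>\<kappa> E. (\<lambda>x. (T_op nu sig \<kappa> E s ^^ Suc m) f (Some x)) \<in> borel_measurable borel"
    unfolding gS using T_meas[OF m] by blast
  have B: "\<exists>M\<ge>0. \<forall>\<kappa> E x. \<bar>(T_op nu sig \<kappa> E s ^^ Suc m) f (Some x)\<bar> \<le> M"
    unfolding gS using T_bound[OF m b] M0 Cs_nonneg[of 1] by (intro exI[of _ "4 * M * (Cs 1 + 1)"]) auto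
  have C: "\<forall>e>0. \<exists>\<theta>>0. \<forall>E u v. \<bar>u - v\<bar> < \<theta> \<longrightarrow> \<bar>(T_op nu sig 0 E s ^^ Suc m) f (Some u) - (T_op nu sig 0 E s ^^ Suc m) f (Some v)\<bar> \<le> e"
    unfolding gS using step_equi[of "g 0", OF m b M0 equi] by blast
  have D': "\<forall>\<epsilon>>0. \<exists>\<kappa>0>0. \<forall>\<kappa> E x. 0 < \<kappa> \<longrightarrow> \<kappa> \<le> \<kappa>0 \<longrightarrow> \<bar>(T_op nu sig \<kappa> E s ^^ Suc m) f (Some x) - (T_op nu sig 0 E s ^^ Suc m) f (Some x)\<bar> \<le> \<epsilon>"
    unfolding gS using step_conv[OF m b M0 equi conv] by blast
  show ?case using A B C D' by blast
qed

end


lemma inC_props: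
  assumes "in_C_rbar f"
  shows "(\<lambda>t. f (Some t)) \<in> borel_measurable borel"
    "\<exists>M. \<forall>t. \<bar>f (Some t)\<bar> \<le> M"
    "\<And>e. 0 < e \<Longrightarrow> \<exists>\<theta>>0. \<forall>u v. \<bar>u - v\<bar> < \<theta> \<longrightarrow> \<bar>f (Some u) - f (Some v)\<bar> \<le> e"
proof -
  define F where "F = (\<lambda>t. f (Some t))"
  define L where "L = f None"
  have cont: "continuous_on UNIV F" and lim: "(F \<longlongrightarrow> L) at_infinity"
    using assms unfolding in_C_rbar_def F_def L_def by auto
  show "(\<lambda>t. f (Some t)) \<in> borel_measurable borel"
    using borel_measurable_continuous_onI[OF cont] unfolding F_def .
  have tail: "\<exists>R. \<forall>x. R \<le> \<bar>x\<bar> \<longrightarrow> \<bar>F x - L\<bar> < e" if "0 < e" for e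
  proof -
    have "\<forall>\<^sub>F x in at_infinity. dist (F x) L < e" using lim that by (rule tendstoD)
    then obtain R where "\<And>x. R \<le> norm x \<Longrightarrow> dist (F x) L < e" unfolding eventually_at_infinity by blast
    thus ?thesis by (auto simp: dist_real_def)
  qed
  obtain R where R: "\<And>x. R \<le> \<bar>x\<bar> \<Longrightarrow> \<bar>F x - L\<bar> < 1" using tail[of 1] by auto
  have "compact (F ` {-\<bar>R\<bar>..\<bar>R\<bar>})"
    by (rule compact_continuous_image) (auto intro: continuous_on_subset[OF cont])
  then obtain K where K: "\<And>y. y \<in> F ` {-\<bar>R\<bar>..\<bar>R\<bar>} \<Longrightarrow> norm y \<le> K"
    using compact_imp_bounded bounded_iff by metis
  show "\<exists>M. \<forall>t. \<bar>f (Some t)\<bar> \<le> M"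
  proof (intro exI[of _ "max K (\<bar>L\<bar> + 1)"] allI)
    fix t
    show "\<bar>f (Some t)\<bar> \<le> max K (\<bar>L\<bar> + 1)"
    proof (cases "\<bar>t\<bar> \<le> \<bar>R\<bar>")
      case True thus ?thesis using K[of "F t"] by (auto simp: F_def abs_le_iff)
    next
      case False
      hence "\<bar>f (Some t) - L\<bar> < 1" using R[of t] by (auto simp: F_def)
      thus ?thesis by linarith
    qed
  qed
  fix e :: real assume e: "0 < e"
  obtain R2 where R2: "\<And>x. R2 \<le> \<bar>x\<bar> \<Longrightarrow> \<bar>F x - L\<bar> < e / 2" using tail[of "e/2"] e by auto
  define R3 where "R3 = \<bar>R2\<bar> + 1"
  have "uniformly_continuous_on {-R3..R3} F"
    by (rule compact_uniformly_continuous) (auto intro: continuous_on_subset[OF cont])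
  then obtain d where d: "d > 0" "\<And>x x'. x \<in> {-R3..R3} \<Longrightarrow> x' \<in> {-R3..R3} \<Longrightarrow> dist x' x < d \<Longrightarrow> dist (F x') (F x) < e"
    unfolding uniformly_continuous_on_def using e by metis
  show "\<exists>\<theta>>0. \<forall>u v. \<bar>u - v\<bar> < \<theta> \<longrightarrow> \<bar>f (Some u) - f (Some v)\<bar> \<le> e"
  proof (intro exI[of _ "min d 1"] conjI allI impI)
    show "0 < min d 1" using d by simp
    fix u v :: real assume uv: "\<bar>u - v\<bar> < min d 1"
    show "\<bar>f (Some u) - f (Some v)\<bar> \<le> e"
    proof (cases "\<bar>u\<bar> \<le> R3 \<and> \<bar>v\<bar> \<le> R3")
      case True
      hence "dist (F u) (F v) < e" using d(2)[of v u] uv by (auto simp: dist_real_def abs_le_iff)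
      thus ?thesis by (simp add: F_def dist_real_def)
    next
      case False
      hence "R2 \<le> \<bar>u\<bar>" "R2 \<le> \<bar>v\<bar>" using uv unfolding R3_def by (auto simp: abs_if split: if_splits)
      hence "\<bar>F u - L\<bar> < e / 2" "\<bar>F v - L\<bar> < e / 2" using R2 by auto
      thus ?thesis unfolding F_def by linarith
    qed
  qed
qed


theorem lemma3p3:
  fixes nu :: "real \<Rightarrow> real" and sig :: "(real \<times> real) measure"
    and K s :: real and m :: nat and f :: "real option \<Rightarrow> real"
  assumes "nu \<in> borel_measurable borel"
    and "\<forall>x. 0 \<le> nu x"
    and "\<exists>B. \<forall>x. nu x \<le> B"
    and "\<forall>x. x \<notin> {-K..K} \<longrightarrow> nu x = 0"
    and "prob_space (density lborel (\<lambda>x. ennreal (nu x)))"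
    and "prob_space sig"
    and "sets sig = sets borel"
    and "measure sig ({-1..1} \<times> {-1..1}) = 1"
    and "0 < s" and "s < 1/2"
    and "in_C_rbar f"
  shows "\<forall>\<epsilon>>0. \<forall>\<^sub>F \<kappa> in at_right 0. \<forall>E w.
     \<bar>(T_op nu sig \<kappa> E s ^^ m) f w - (T_op nu sig 0 E s ^^ m) f w\<bar> \<le> \<epsilon>"
proof -
  obtain B where B: "\<And>x. nu x \<le> B" using assms(3) by blast
  have box: "AE p in sig. \<bar>fst p\<bar> \<le> 1 \<and> \<bar>snd p\<bar> \<le> 1"
  proof -
    have "AE p in sig. p \<in> {-1..1} \<times> {-1..1}"
      by (rule prob_space.AE_prob_1[OF assms(6)]) (use assms(8) in simp)
    thus ?thesis by (rule AE_mp[OF _ AE_I2]) (auto simp: abs_le_iff)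
  qed
  interpret setting nu sig s B
    by (rule setting.intro[OF assms(1) _ B assms(5) assms(6) assms(7) box assms(9)]) (use assms(2,10) in auto)
  obtain Mf where Mf: "\<And>t. \<bar>f (Some t)\<bar> \<le> Mf" using inC_props(2)[OF assms(11)] by blast
  have conv: "\<forall>\<epsilon>>0. \<exists>\<kappa>0>0. \<forall>\<kappa> E x. 0 < \<kappa> \<longrightarrow> \<kappa> \<le> \<kappa>0 \<longrightarrow> \<bar>(T_op nu sig \<kappa> E s ^^ m) f (Some x) - (T_op nu sig 0 E s ^^ m) f (Some x)\<bar> \<le> \<epsilon>"
    by (rule conjunct2[OF conjunct2[OF conjunct2[OF main_ind[OF inC_props(1)[OF assms(11)] Mf inC_props(3)[OF assms(11)], of m]]]])
  have none: "(T_op nu sig \<kappa> E s ^^ m) f None = (T_op nu sig 0 E s ^^ m) f None" for \<kappa> E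
    by (cases m) (simp_all add: T_None)
  show ?thesis
  proof (intro allI impI)
    fix \<epsilon> :: real assume e: "0 < \<epsilon>"
    then obtain \<kappa>0 where k0: "\<kappa>0 > 0" "\<And>\<kappa> E x. 0 < \<kappa> \<Longrightarrow> \<kappa> \<le> \<kappa>0 \<Longrightarrow> \<bar>(T_op nu sig \<kappa> E s ^^ m) f (Some x) - (T_op nu sig 0 E s ^^ m) f (Some x)\<bar> \<le> \<epsilon>"
      using conv by blast
    show "\<forall>\<^sub>F \<kappa> in at_right 0. \<forall>E w. \<bar>(T_op nu sig \<kappa> E s ^^ m) f w - (T_op nu sig 0 E s ^^ m) f w\<bar> \<le> \<epsilon>"
      unfolding eventually_at_right_field
    proof (intro exI[of _ \<kappa>0] conjI allI impI k0(1))
      fix \<kappa> E w assume k: "0 < \<kappa>" "\<kappa> < \<kappa>0"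
      show "\<bar>(T_op nu sig \<kappa> E s ^^ m) f w - (T_op nu sig 0 E s ^^ m) f w\<bar> \<le> \<epsilon>"
      proof (cases w)
        case None thus ?thesis using none[of \<kappa> E] e by simp
      next
        case (Some x) thus ?thesis using k0(2)[of \<kappa> E x] k by simp
      qed
    qed
  qed
qed


end
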